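(* In the parallel-links routing game with homogeneous costs described in the context, for every $l$ with $1\le l<L$: (i) $T_l(f^*_l)\le T_{l+1}(f^*_{l+1})$; (ii) $T_l(\hat f_l)\le T_{l+1}(\hat f_{l+1})$.
   Context: Parallel-links routing game: users $\mathcal N=\{1,\dots,N\}$ share parallel links $\mathcal L=\{1,\dots,L\}$ from a common source to a common destination; link $l$ has capacity $c_l$, links indexed so that $c_1\ge c_2\ge\dots\ge c_L$. User $i$ has demand $r^i>0$, $R=\sum_ir^i<\sum_lc_l$. A routing strategy of user $i$ is $\mathbf f^i=(f^i_l)_l$ with $f^i_l\ge0$, $\sum_lf^i_l=r^i$; feasible profiles form $\mathbf F$; $f_l=\sum_if^i_l$. Homogeneous costs: $J^i(\mathbf f)=\sum_lf^i_lT_l(f_l)$, each $T_l:[0,\infty)\to[0,\infty)$ strictly increasing, convex, continuously differentiable, with $T_l(f_l)=T(c_l-f_l)$ for $f_l<c_l$ and $T_l(f_l)=\infty$ for $f_l\ge c_l$, for a single link-independent function $T$ with $T(c_l-f_l)$ strictly increasing in $f_l$. $(\hat f_l)_l$ are the link totals of the unique Nash equilibrium (feasible profile where each user's strategy minimizes its own cost given the others'). $(f^*_l)_l$ are the link totals minimizing the social cost $\sum_lf_lT_l(f_l)$ over feasible profiles. *)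

theory Defs
  imports "HOL-Analysis.Analysis" "HOL-Library.Extended_Real"
begin

definition strategy :: "nat \<Rightarrow> real \<Rightarrow> (nat \<Rightarrow> real) \<Rightarrow> bool" where
  "strategy L ri g \<longleftrightarrow> (\<forall>l\<in>{1..L}. 0 \<le> g l) \<and> (\<Sum>l=1..L. g l) = ri"

definition feasible :: "nat \<Rightarrow> nat \<Rightarrow> (nat \<Rightarrow> real) \<Rightarrow> (nat \<Rightarrow> nat \<Rightarrow> real) \<Rightarrow> bool" where
  "feasible N L r f \<longleftrightarrow> (\<forall>i\<in>{1..N}. strategy L (r i) (f i))"

definition linkflow :: "nat \<Rightarrow> (nat \<Rightarrow> nat \<Rightarrow> real) \<Rightarrow> nat \<Rightarrow> real" where
  "linkflow N f l = (\<Sum>i=1..N. f i l)"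

definition linkcost :: "(real \<Rightarrow> real) \<Rightarrow> (nat \<Rightarrow> real) \<Rightarrow> nat \<Rightarrow> real \<Rightarrow> ereal" where
  "linkcost T c l x = (if x < c l then ereal (T (c l - x)) else \<infinity>)"

definition user_cost :: "nat \<Rightarrow> nat \<Rightarrow> (real \<Rightarrow> real) \<Rightarrow> (nat \<Rightarrow> real)
    \<Rightarrow> (nat \<Rightarrow> nat \<Rightarrow> real) \<Rightarrow> nat \<Rightarrow> ereal" where
  "user_cost N L T c f i = (\<Sum>l=1..L. ereal (f i l) * linkcost T c l (linkflow N f l))"

definition social_cost :: "nat \<Rightarrow> nat \<Rightarrow> (real \<Rightarrow> real) \<Rightarrow> (nat \<Rightarrow> real)
    \<Rightarrow> (nat \<Rightarrow> nat \<Rightarrow> real) \<Rightarrow> ereal" where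
  "social_cost N L T c f = (\<Sum>l=1..L. ereal (linkflow N f l) * linkcost T c l (linkflow N f l))"

definition nash_eq :: "nat \<Rightarrow> nat \<Rightarrow> (nat \<Rightarrow> real) \<Rightarrow> (real \<Rightarrow> real) \<Rightarrow> (nat \<Rightarrow> real)
    \<Rightarrow> (nat \<Rightarrow> nat \<Rightarrow> real) \<Rightarrow> bool" where
  "nash_eq N L r T c f \<longleftrightarrow> feasible N L r f \<and>
     (\<forall>i\<in>{1..N}. \<forall>g. strategy L (r i) g \<longrightarrow>
        user_cost N L T c f i \<le> user_cost N L T c (f(i := g)) i)"

definition social_opt :: "nat \<Rightarrow> nat \<Rightarrow> (nat \<Rightarrow> real) \<Rightarrow> (real \<Rightarrow> real) \<Rightarrow> (nat \<Rightarrow> real)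
    \<Rightarrow> (nat \<Rightarrow> nat \<Rightarrow> real) \<Rightarrow> bool" where
  "social_opt N L r T c f \<longleftrightarrow> feasible N L r f \<and>
     (\<forall>g. feasible N L r g \<longrightarrow> social_cost N L T c f \<le> social_cost N L T c g)"

end

theory Submission imports Defs begin

lemma key:
  fixes T :: "real \<Rightarrow> real"
  assumes cv: "convex_on {0<..C} T"
    and dec: "\<forall>x y. 0 < x \<and> x < y \<and> y \<le> C \<longrightarrow> T y < T x"
    and a: "0 < a" and t: "0 < t" and ab: "a + t < b - t" and bC: "b \<le> C"
    and y: "0 \<le> y" "y \<le> x"
  shows "(x - t) * T (a + t) + (y + t) * T (b - t) < x * T a + y * T b"
proof -
  have s1: "(T a - T (a+t)) / (a - (a+t)) \<le> (T a - T b) / (a - b)"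
    by (rule convex_on_slope_le(1)[OF cv]) (use a t ab bC in auto)
  have s2: "(T a - T b) / (a - b) \<le> (T (b-t) - T b) / ((b-t) - b)"
    by (rule convex_on_slope_le(2)[OF cv]) (use a t ab bC in auto)
  have "(T a - T (a+t)) / (a - (a+t)) = (T (a+t) - T a) / t" using t by (simp add: field_simps)
  moreover have "(T (b-t) - T b) / ((b-t) - b) = (T b - T (b-t)) / t" using t by (simp add: field_simps)
  ultimately have "(T (a+t) - T a) / t \<le> (T b - T (b-t)) / t" using s1 s2 by linarith
  hence d: "T (a+t) - T a \<le> T b - T (b-t)" using t by (simp add: divide_right_mono_neg divide_le_cancel)
  have d1: "T (a+t) - T a \<le> 0" using dec a t ab bC by (smt (verit))
  have d3: "T (b-t) < T (a+t)" using dec a t ab bC by (smt (verit))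
  have "y * (T (a+t) - T a) \<le> y * (T b - T (b-t))" using d y by (simp add: mult_left_mono)
  moreover have "(x - y) * (T (a+t) - T a) \<le> 0" using d1 y by (simp add: mult_nonneg_nonpos)
  moreover have "t * (T (b-t) - T (a+t)) < 0" using t d3 by (simp add: mult_pos_neg)
  ultimately show ?thesis by (simp add: algebra_simps)
qed

lemma sum_two_change:
  fixes P Q :: "nat \<Rightarrow> real"
  assumes "finite A" "l \<in> A" "m \<in> A" "l \<noteq> m" "\<forall>k\<in>A-{l,m}. Q k = P k"
    "Q l + Q m < P l + P m"
  shows "sum Q A < sum P A"
proof -
  have eq: "sum Q (A - {l} - {m}) = sum P (A - {l} - {m})"
    using assms(5) by (intro sum.cong) auto
  have "sum Q A = Q l + (Q m + sum Q (A - {l} - {m}))"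
    using assms(1-4) by (simp add: sum.remove[of A l] sum.remove[of "A-{l}" m])
  moreover have "sum P A = P l + (P m + sum P (A - {l} - {m}))"
    using assms(1-4) by (simp add: sum.remove[of A l] sum.remove[of "A-{l}" m])
  ultimately show ?thesis using eq assms(6) by linarith
qed

lemma ereal_sum_lt:
  fixes p q :: "nat \<Rightarrow> ereal"
  assumes A: "finite A" "l \<in> A" "m \<in> A" "l \<noteq> m"
    and nn: "\<forall>k\<in>A. 0 \<le> p k" and fin: "\<forall>k\<in>A. p k < \<infinity>"
    and same: "\<forall>k\<in>A-{l,m}. q k = p k"
    and ql: "q l = ereal u" and qm: "q m = ereal v"
    and pl: "p l = ereal u'" and pm: "p m = ereal v'" and lt: "u + v < u' + v'"
  shows "sum q A < sum p A"
proof -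
  define P where "P k = real_of_ereal (p k)" for k
  define Q where "Q k = real_of_ereal (q k)" for k
  have pP: "p k = ereal (P k)" if "k \<in> A" for k
    using nn fin that unfolding P_def by (metis ereal_real' abs_ereal_ge0 less_irrefl)
  have qQ: "q k = ereal (Q k)" if "k \<in> A" for k
  proof (cases "k \<in> {l, m}")
    case True then show ?thesis using ql qm unfolding Q_def by auto
  next
    case False then show ?thesis using same pP[OF that] that unfolding Q_def by auto
  qed
  have "sum p A = ereal (sum P A)" using pP by (simp add: sum.cong[of A A p "\<lambda>k. ereal (P k)"])
  moreover have "sum q A = ereal (sum Q A)" using qQ by (simp add: sum.cong[of A A q "\<lambda>k. ereal (Q k)"])
  moreover have "sum Q A < sum P A"
  proof (rule sum_two_change[OF A])
    show "\<forall>k\<in>A - {l, m}. Q k = P k" using same unfolding P_def Q_def by auto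
    show "Q l + Q m < P l + P m" using ql qm pl pm lt unfolding P_def Q_def by simp
  qed
  ultimately show ?thesis by simp
qed

lemma sum_upd2:
  fixes h :: "nat \<Rightarrow> real"
  assumes "l \<in> {1..L}" "Suc l \<in> {1..L}"
  shows "(\<Sum>k=1..L. (h(l := h l - t, Suc l := h (Suc l) + t)) k) = (\<Sum>k=1..L. h k)"
proof -
  have "(\<Sum>k=1..L. (h(l := h l - t, Suc l := h (Suc l) + t)) k)
      = (\<Sum>k=1..L. h k + (if k = l then -t else 0) + (if k = Suc l then t else 0))"
    by (intro sum.cong) auto
  also have "\<dots> = (\<Sum>k=1..L. h k)" using assms by (simp add: sum.distrib)
  finally show ?thesis .
qed

locale game =
  fixes N L :: nat and r c :: "nat \<Rightarrow> real" and T :: "real \<Rightarrow> real"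
  assumes cap_pos: "\<forall>k\<in>{1..L}. 0 < c k"
    and cap_sorted: "\<forall>k. 1 \<le> k \<and> k < L \<longrightarrow> c (k + 1) \<le> c k"
    and dem_pos: "\<forall>i\<in>{1..N}. 0 < r i"
    and dem_cap: "(\<Sum>i=1..N. r i) < (\<Sum>k=1..L. c k)"
    and T_nonneg: "\<forall>x\<in>{0<..c 1}. 0 \<le> T x"
    and T_strict_decr: "\<forall>x y. 0 < x \<and> x < y \<and> y \<le> c 1 \<longrightarrow> T y < T x"
    and T_convex: "convex_on {0<..c 1} T"
begin

lemma c_le1: "k \<in> {1..L} \<Longrightarrow> c k \<le> c 1"
proof (induction k)
  case 0 then show ?case by simp
next
  case (Suc k)
  show ?case
  proof (cases "k = 0")
    case True then show ?thesis by simp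
  next
    case False
    then have "c (Suc k) \<le> c k" using cap_sorted Suc.prems by auto
    moreover have "c k \<le> c 1" using Suc False by auto
    ultimately show ?thesis by simp
  qed
qed

lemma lc_nonneg: "k \<in> {1..L} \<Longrightarrow> 0 \<le> x \<Longrightarrow> 0 \<le> linkcost T c k x"
  unfolding linkcost_def using T_nonneg c_le1[of k] by auto

lemma term_nonneg: "k \<in> {1..L} \<Longrightarrow> 0 \<le> a \<Longrightarrow> 0 \<le> x \<Longrightarrow> 0 \<le> ereal a * linkcost T c k x"
  using lc_nonneg[of k x] by (simp add: )


lemma lf_nonneg: "feasible N L r f \<Longrightarrow> k \<in> {1..L} \<Longrightarrow> 0 \<le> linkflow N f k"
  unfolding feasible_def strategy_def linkflow_def by (auto intro: sum_nonneg)

lemma term_fin: "x < c k \<Longrightarrow> ereal a * linkcost T c k x = ereal (a * T (c k - x))"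
  by (simp add: linkcost_def)

lemma term_inf: "c k \<le> x \<Longrightarrow> 0 < a \<Longrightarrow> ereal a * linkcost T c k x = \<infinity>"
  by (simp add: linkcost_def)

lemma sum_fin_each:
  fixes p :: "nat \<Rightarrow> ereal"
  assumes "finite A" "\<forall>k\<in>A. 0 \<le> p k" "sum p A < \<infinity>" "k \<in> A"
  shows "p k < \<infinity>"
proof -
  have "sum p {k} \<le> sum p A" by (rule sum_mono2) (use assms in auto)
  then have "p k \<le> sum p A" by simp
  then show ?thesis using assms(3) by (rule order.strict_trans1)
qed

lemma lf_update:
  assumes "i \<in> {1..N}"
  shows "linkflow N (f(i:=g)) k = linkflow N f k - f i k + g k"
proof -
  have "(\<Sum>j=1..N. (f(i:=g)) j k) = g k + (\<Sum>j\<in>{1..N}-{i}. (f(i:=g)) j k)"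
    using assms by (simp add: sum.remove[of _ i])
  also have "(\<Sum>j\<in>{1..N}-{i}. (f(i:=g)) j k) = (\<Sum>j\<in>{1..N}-{i}. f j k)"
    by (intro sum.cong) auto
  also have "(\<Sum>j\<in>{1..N}-{i}. f j k) = (\<Sum>j=1..N. f j k) - f i k"
    using assms by (simp add: sum.remove[of _ i])
  finally show ?thesis unfolding linkflow_def by simp
qed

lemma social_fin:
  assumes opt: "social_opt N L r T c f"
  shows "social_cost N L T c f < \<infinity>"
proof -
  define C where "C = (\<Sum>k=1..L. c k)"
  define R where "R = (\<Sum>i=1..N. r i)"
  have R0: "0 \<le> R" unfolding R_def using dem_pos by (auto intro: sum_nonneg less_imp_le)
  have RC: "R < C" using dem_cap unfolding R_def C_def .
  with R0 have C0: "0 < C" by simp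
  define g where "g i k = r i * c k / C" for i k
  have feas: "feasible N L r g"
    unfolding feasible_def strategy_def
  proof (intro ballI conjI)
    fix i l assume i: "i \<in> {1..N}" and "l \<in> {1..L}"
    then have "0 < r i" "0 < c l" using dem_pos cap_pos by auto
    then show "0 \<le> g i l" unfolding g_def using C0 by simp
  next
    fix i assume i: "i \<in> {1..N}"
    have "(\<Sum>l = 1..L. g i l) = r i * C / C"
      unfolding g_def C_def by (simp add: sum_divide_distrib[symmetric] sum_distrib_left)
    then show "(\<Sum>l = 1..L. g i l) = r i" using C0 by simp
  qed
  have lf: "linkflow N g k < c k" if k: "k \<in> {1..L}" for k
  proof -
    have "linkflow N g k = R * c k / C"
      unfolding linkflow_def g_def R_def by (simp add: sum_divide_distrib[symmetric] sum_distrib_right)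
    also have "\<dots> < c k" using RC C0 cap_pos k by (simp add: divide_less_eq)
    finally show ?thesis .
  qed
  have "social_cost N L T c g = (\<Sum>k=1..L. ereal (linkflow N g k * T (c k - linkflow N g k)))"
    unfolding social_cost_def by (intro sum.cong refl term_fin lf) simp
  then have "social_cost N L T c g < \<infinity>" by simp
  moreover have "social_cost N L T c f \<le> social_cost N L T c g" using opt feas unfolding social_opt_def by blast
  ultimately show ?thesis by (metis order.strict_trans1)
qed


lemma nash_fin:
  assumes ne: "nash_eq N L r T c f" and i: "i \<in> {1..N}"
  shows "user_cost N L T c f i < \<infinity>"
proof -
  have feas: "feasible N L r f" using ne unfolding nash_eq_def by blast
  define ot where "ot k = linkflow N f k - f i k" for k
  define s where "s k = max 0 (c k - ot k)" for k
  define S where "S = (\<Sum>k=1..L. s k)"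
  have rows: "(\<Sum>k=1..L. f j k) = r j" if "j \<in> {1..N}" for j
    using feas that unfolding feasible_def strategy_def by blast
  have "(\<Sum>k=1..L. linkflow N f k) = (\<Sum>j=1..N. \<Sum>k=1..L. f j k)"
    unfolding linkflow_def by (rule sum.swap)
  also have "\<dots> = (\<Sum>j=1..N. r j)" using rows by (intro sum.cong) auto
  finally have sl: "(\<Sum>k=1..L. linkflow N f k) = (\<Sum>j=1..N. r j)" .
  have sum_ot: "(\<Sum>k=1..L. ot k) = (\<Sum>j=1..N. r j) - r i"
    unfolding ot_def using sl rows[OF i] by (simp add: sum_subtractf)
  have "(\<Sum>k=1..L. c k - ot k) \<le> S" unfolding S_def s_def by (intro sum_mono) auto
  moreover have "(\<Sum>k=1..L. c k - ot k) = (\<Sum>k=1..L. c k) - (\<Sum>k=1..L. ot k)" by (simp add: sum_subtractf)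
  ultimately have Sgt: "r i < S" using sum_ot dem_cap by linarith
  have ri: "0 < r i" using dem_pos i by blast
  with Sgt have S0: "0 < S" by simp
  define g where "g k = r i * s k / S" for k
  have strat: "strategy L (r i) g"
    unfolding strategy_def
  proof (intro ballI conjI)
    fix l show "0 \<le> g l" unfolding g_def s_def using ri S0 by simp
  next
    have "(\<Sum>l=1..L. g l) = r i * S / S" unfolding g_def S_def
      by (simp add: sum_divide_distrib[symmetric] sum_distrib_left)
    then show "(\<Sum>l=1..L. g l) = r i" using S0 by simp
  qed
  have each: "ereal (g k) * linkcost T c k (ot k + g k) < \<infinity>" if k: "k \<in> {1..L}" for k
  proof (cases "s k = 0")
    case True then show ?thesis unfolding g_def by simp
  next
    case False
    then have sk: "s k = c k - ot k" "0 < s k" unfolding s_def by auto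
    have "r i * s k < S * s k" using Sgt sk by simp
    then have "g k < s k" unfolding g_def using S0 by (simp add: divide_less_eq mult.commute)
    then have "ot k + g k < c k" using sk by simp
    then show ?thesis by (simp add: term_fin)
  qed
  have "user_cost N L T c (f(i := g)) i = (\<Sum>k=1..L. ereal (g k) * linkcost T c k (ot k + g k))"
    unfolding user_cost_def using lf_update[OF i] unfolding ot_def by (intro sum.cong) auto
  also have "\<dots> < \<infinity>" using each by (simp add: sum_Pinfty less_top[symmetric])
  finally have "user_cost N L T c (f(i := g)) i < \<infinity>" .
  moreover have "user_cost N L T c f i \<le> user_cost N L T c (f(i := g)) i"
    using ne strat i unfolding nash_eq_def by blast
  ultimately show ?thesis by (metis order.strict_trans1)
qed


lemma shift_strat:
  assumes feas: "feasible N L r f" and i: "i \<in> {1..N}" and l: "1 \<le> l" "l < L"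
    and t: "0 \<le> t" "t \<le> f i l"
  shows "strategy L (r i) ((f i)(l := f i l - t, Suc l := f i (Suc l) + t))"
proof -
  have s: "strategy L (r i) (f i)" using feas i unfolding feasible_def by blast
  show ?thesis unfolding strategy_def
  proof (intro conjI ballI)
    fix k assume "k \<in> {1..L}" then show "0 \<le> ((f i)(l := f i l - t, Suc l := f i (Suc l) + t)) k"
      using s t l unfolding strategy_def by auto
  next
    show "(\<Sum>k=1..L. ((f i)(l := f i l - t, Suc l := f i (Suc l) + t)) k) = r i"
      using sum_upd2[of l L "f i" t] l s unfolding strategy_def by auto
  qed
qed

lemma shift_feas:
  assumes feas: "feasible N L r f" and i: "i \<in> {1..N}" and l: "1 \<le> l" "l < L"
    and t: "0 \<le> t" "t \<le> f i l"
  shows "feasible N L r (f(i := (f i)(l := f i l - t, Suc l := f i (Suc l) + t)))"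
  using shift_strat[OF assms] feas unfolding feasible_def by auto

lemma shift_lf:
  assumes i: "i \<in> {1..N}"
  shows "linkflow N (f(i := (f i)(l := f i l - t, Suc l := f i (Suc l) + t))) k
       = linkflow N f k + (if k = l then -t else 0) + (if k = Suc l then t else 0)"
  using lf_update[OF i, of f "(f i)(l := f i l - t, Suc l := f i (Suc l) + t)" k] by auto

lemma part_opt:
  assumes opt: "social_opt N L r T c f" and l: "1 \<le> l" "l < L"
  shows "linkcost T c l (linkflow N f l) \<le> linkcost T c (Suc l) (linkflow N f (Suc l))"
proof (rule ccontr)
  let ?F = "linkflow N f"
  assume "\<not> ?thesis"
  hence lt: "linkcost T c (Suc l) (?F (Suc l)) < linkcost T c l (?F l)" by simp
  have feas: "feasible N L r f" using opt unfolding social_opt_def by blast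
  have lS: "l \<in> {1..L}" "Suc l \<in> {1..L}" using l by auto
  have nn: "\<forall>k\<in>{1..L}. 0 \<le> ereal (?F k) * linkcost T c k (?F k)"
    using term_nonneg lf_nonneg[OF feas] by auto
  have fin: "\<forall>k\<in>{1..L}. ereal (?F k) * linkcost T c k (?F k) < \<infinity>"
  proof
    fix k assume k: "k \<in> {1..L}"
    have "social_cost N L T c f < \<infinity>" by (rule social_fin[OF opt])
    then show "ereal (?F k) * linkcost T c k (?F k) < \<infinity>" unfolding social_cost_def
      by (intro sum_fin_each[where p = "\<lambda>k. ereal (?F k) * linkcost T c k (?F k)", OF _ nn _ k]) auto
  qed
  have Fc: "?F k < c k" if k: "k \<in> {1..L}" for k
  proof (rule ccontr)
    assume "\<not> ?F k < c k"
    moreover have "0 < c k" using cap_pos k by auto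
    ultimately have "c k \<le> ?F k" "0 < ?F k" by auto
    then have "ereal (?F k) * linkcost T c k (?F k) = \<infinity>" by (rule term_inf)
    then show False using fin k by auto
  qed
  define a where "a = c l - ?F l"
  define b where "b = c (Suc l) - ?F (Suc l)"
  have a0: "0 < a" using Fc lS unfolding a_def by auto
  have b0: "0 < b" using Fc lS unfolding b_def by auto
  have Tab: "T b < T a" using lt Fc lS unfolding linkcost_def a_def b_def by simp
  have F1nn: "0 \<le> ?F (Suc l)" using lf_nonneg[OF feas] lS by auto
  have F0nn: "0 \<le> ?F l" using lf_nonneg[OF feas] lS by auto
  have bc1: "b \<le> c 1" using c_le1[OF lS(2)] F1nn unfolding b_def by simp
  have ac1: "a \<le> c 1" using c_le1[OF lS(1)] F0nn unfolding a_def by simp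
  have ab: "a < b"
  proof (rule ccontr)
    assume "\<not> a < b"
    then have "b = a \<or> b < a" by auto
    then show False using Tab T_strict_decr b0 ac1 by (metis less_irrefl order.asym)
  qed
  have csort: "c (Suc l) \<le> c l" using cap_sorted l by auto
  have FF: "?F (Suc l) < ?F l" using ab csort unfolding a_def b_def by linarith
  have "\<exists>i\<in>{1..N}. 0 < f i l"
  proof (rule ccontr)
    assume "\<not> ?thesis" then have "\<forall>i\<in>{1..N}. f i l \<le> 0" by auto
    then have "?F l \<le> 0" unfolding linkflow_def by (intro sum_nonpos) auto
    then show False using FF F1nn by linarith
  qed
  then obtain i where i: "i \<in> {1..N}" "0 < f i l" by blast
  have fnn: "\<forall>j\<in>{1..N}. 0 \<le> f j l" using feas lS unfolding feasible_def strategy_def by auto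
  have fil: "f i l \<le> ?F l"
  proof -
    have "sum (\<lambda>j. f j l) {i} \<le> sum (\<lambda>j. f j l) {1..N}" by (rule sum_mono2) (use i fnn in auto)
    then show ?thesis unfolding linkflow_def by simp
  qed
  define t where "t = min (f i l) ((b - a) / 4)"
  have t0: "0 < t" "t \<le> f i l" "t \<le> (b - a) / 4" using i ab unfolding t_def by (auto simp: min_def)
  have "(b - a) / 4 < b" using ab a0 by (simp add: field_simps)
  then have tb: "t < b" using t0(3) by linarith
  define g where "g = f(i := (f i)(l := f i l - t, Suc l := f i (Suc l) + t))"
  have gfeas: "feasible N L r g" unfolding g_def using shift_feas[OF feas i(1) l] t0 by auto
  have glf: "linkflow N g k = ?F k + (if k = l then -t else 0) + (if k = Suc l then t else 0)" for k
    unfolding g_def by (rule shift_lf[OF i(1)])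
  have "social_cost N L T c g < social_cost N L T c f"
    unfolding social_cost_def
  proof (rule ereal_sum_lt[where l = l and m = "Suc l" and u = "(?F l - t) * T (a + t)"
        and v = "(?F (Suc l) + t) * T (b - t)" and u' = "?F l * T a" and v' = "?F (Suc l) * T b"])
    show "finite {1..L}" "l \<in> {1..L}" "Suc l \<in> {1..L}" "l \<noteq> Suc l" using lS by auto
    show "\<forall>k\<in>{1..L}. 0 \<le> ereal (?F k) * linkcost T c k (?F k)" by (rule nn)
    show "\<forall>k\<in>{1..L}. ereal (?F k) * linkcost T c k (?F k) < \<infinity>" by (rule fin)
    show "\<forall>k\<in>{1..L} - {l, Suc l}. ereal (linkflow N g k) * linkcost T c k (linkflow N g k)
        = ereal (?F k) * linkcost T c k (?F k)" using glf by auto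
    have lt1: "?F l - t < c l" using Fc[OF lS(1)] t0 by linarith
    have e1: "c l - (?F l - t) = a + t" unfolding a_def by simp
    have g1: "linkflow N g l = ?F l - t" using glf[of l] by simp
    show "ereal (linkflow N g l) * linkcost T c l (linkflow N g l) = ereal ((?F l - t) * T (a + t))"
      by (simp only: g1 term_fin[OF lt1] e1)
    have lt2: "?F (Suc l) + t < c (Suc l)" using tb b_def by linarith
    have e2: "c (Suc l) - (?F (Suc l) + t) = b - t" unfolding b_def by simp
    have g2: "linkflow N g (Suc l) = ?F (Suc l) + t" using glf[of "Suc l"] by simp
    show "ereal (linkflow N g (Suc l)) * linkcost T c (Suc l) (linkflow N g (Suc l))
        = ereal ((?F (Suc l) + t) * T (b - t))"
      by (simp only: g2 term_fin[OF lt2] e2)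
    show "ereal (?F l) * linkcost T c l (?F l) = ereal (?F l * T a)"
      using Fc lS unfolding a_def by (simp add: term_fin)
    show "ereal (?F (Suc l)) * linkcost T c (Suc l) (?F (Suc l)) = ereal (?F (Suc l) * T b)"
      using Fc lS unfolding b_def by (simp add: term_fin)
    show "(?F l - t) * T (a + t) + (?F (Suc l) + t) * T (b - t) < ?F l * T a + ?F (Suc l) * T b"
      by (rule key[OF T_convex T_strict_decr a0 t0(1) _ bc1 F1nn]) (use t0 ab FF in auto)
  qed
  moreover have "social_cost N L T c f \<le> social_cost N L T c g" using opt gfeas unfolding social_opt_def by blast
  ultimately show False by simp
qed


lemma part_nash:
  assumes ne: "nash_eq N L r T c f" and l: "1 \<le> l" "l < L"
  shows "linkcost T c l (linkflow N f l) \<le> linkcost T c (Suc l) (linkflow N f (Suc l))"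
proof (rule ccontr)
  let ?F = "linkflow N f"
  assume "\<not> ?thesis"
  hence lt: "linkcost T c (Suc l) (?F (Suc l)) < linkcost T c l (?F l)" by simp
  have feas: "feasible N L r f" using ne unfolding nash_eq_def by blast
  have lS: "l \<in> {1..L}" "Suc l \<in> {1..L}" using l by auto
  have fnn: "0 \<le> f j k" if "j \<in> {1..N}" "k \<in> {1..L}" for j k
    using feas that unfolding feasible_def strategy_def by auto
  have nn: "\<forall>k\<in>{1..L}. 0 \<le> ereal (f j k) * linkcost T c k (?F k)" if j: "j \<in> {1..N}" for j
    using term_nonneg lf_nonneg[OF feas] fnn[OF j] by auto
  have fin: "\<forall>k\<in>{1..L}. ereal (f j k) * linkcost T c k (?F k) < \<infinity>" if j: "j \<in> {1..N}" for j
  proof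
    fix k assume k: "k \<in> {1..L}"
    have "user_cost N L T c f j < \<infinity>" by (rule nash_fin[OF ne j])
    then show "ereal (f j k) * linkcost T c k (?F k) < \<infinity>" unfolding user_cost_def
      by (intro sum_fin_each[where p = "\<lambda>k. ereal (f j k) * linkcost T c k (?F k)", OF _ nn[OF j] _ k]) auto
  qed
  have Fc: "?F k < c k" if k: "k \<in> {1..L}" for k
  proof (rule ccontr)
    assume "\<not> ?F k < c k"
    moreover have "0 < c k" using cap_pos k by auto
    ultimately have ck: "c k \<le> ?F k" "0 < ?F k" by auto
    have "\<exists>j\<in>{1..N}. 0 < f j k"
    proof (rule ccontr)
      assume "\<not> ?thesis" then have "\<forall>j\<in>{1..N}. f j k \<le> 0" by auto
      then have "?F k \<le> 0" unfolding linkflow_def by (intro sum_nonpos) auto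
      then show False using ck by linarith
    qed
    then obtain j where j: "j \<in> {1..N}" "0 < f j k" by blast
    have "ereal (f j k) * linkcost T c k (?F k) = \<infinity>" by (rule term_inf[OF ck(1) j(2)])
    then show False using fin[OF j(1)] k by auto
  qed
  define a where "a = c l - ?F l"
  define b where "b = c (Suc l) - ?F (Suc l)"
  have a0: "0 < a" using Fc lS unfolding a_def by auto
  have b0: "0 < b" using Fc lS unfolding b_def by auto
  have Tab: "T b < T a" using lt Fc lS unfolding linkcost_def a_def b_def by simp
  have F1nn: "0 \<le> ?F (Suc l)" using lf_nonneg[OF feas] lS by auto
  have F0nn: "0 \<le> ?F l" using lf_nonneg[OF feas] lS by auto
  have bc1: "b \<le> c 1" using c_le1[OF lS(2)] F1nn unfolding b_def by simp
  have ac1: "a \<le> c 1" using c_le1[OF lS(1)] F0nn unfolding a_def by simp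
  have ab: "a < b"
  proof (rule ccontr)
    assume "\<not> a < b"
    then have "b = a \<or> b < a" by auto
    then show False using Tab T_strict_decr b0 ac1 by (metis less_irrefl order.asym)
  qed
  have csort: "c (Suc l) \<le> c l" using cap_sorted l by auto
  have FF: "?F (Suc l) < ?F l" using ab csort unfolding a_def b_def by linarith
  have "\<exists>i\<in>{1..N}. f i (Suc l) < f i l"
  proof (rule ccontr)
    assume "\<not> ?thesis" then have "\<forall>i\<in>{1..N}. f i l \<le> f i (Suc l)" by auto
    then have "?F l \<le> ?F (Suc l)" unfolding linkflow_def by (intro sum_mono) auto
    then show False using FF by linarith
  qed
  then obtain i where i: "i \<in> {1..N}" "f i (Suc l) < f i l" by blast
  have y0: "0 \<le> f i (Suc l)" using fnn[OF i(1) lS(2)] .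
  define t where "t = min (f i l) ((b - a) / 4)"
  have t0: "0 < t" "t \<le> f i l" "t \<le> (b - a) / 4" using i y0 ab unfolding t_def by (auto simp: min_def)
  have "(b - a) / 4 < b" using ab a0 by (simp add: field_simps)
  then have tb: "t < b" using t0(3) by linarith
  define h where "h = (f i)(l := f i l - t, Suc l := f i (Suc l) + t)"
  define g where "g = f(i := h)"
  have hstrat: "strategy L (r i) h" unfolding h_def using shift_strat[OF feas i(1) l] t0 by auto
  have glf: "linkflow N g k = ?F k + (if k = l then -t else 0) + (if k = Suc l then t else 0)" for k
    unfolding g_def h_def by (rule shift_lf[OF i(1)])
  have "user_cost N L T c g i < user_cost N L T c f i"
    unfolding user_cost_def
  proof (rule ereal_sum_lt[where l = l and m = "Suc l" and u = "(f i l - t) * T (a + t)"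
        and v = "(f i (Suc l) + t) * T (b - t)" and u' = "f i l * T a" and v' = "f i (Suc l) * T b"])
    show "finite {1..L}" "l \<in> {1..L}" "Suc l \<in> {1..L}" "l \<noteq> Suc l" using lS by auto
    show "\<forall>k\<in>{1..L}. 0 \<le> ereal (f i k) * linkcost T c k (?F k)" by (rule nn[OF i(1)])
    show "\<forall>k\<in>{1..L}. ereal (f i k) * linkcost T c k (?F k) < \<infinity>" by (rule fin[OF i(1)])
    show "\<forall>k\<in>{1..L} - {l, Suc l}. ereal (g i k) * linkcost T c k (linkflow N g k)
        = ereal (f i k) * linkcost T c k (?F k)" using glf unfolding g_def h_def by auto
    have lt1: "?F l - t < c l" using Fc[OF lS(1)] t0 by linarith
    have e1: "c l - (?F l - t) = a + t" unfolding a_def by simp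
    have g1: "linkflow N g l = ?F l - t" using glf[of l] by simp
    have gi1: "g i l = f i l - t" unfolding g_def h_def by simp
    show "ereal (g i l) * linkcost T c l (linkflow N g l) = ereal ((f i l - t) * T (a + t))"
      by (simp only: gi1 g1 term_fin[OF lt1] e1)
    have lt2: "?F (Suc l) + t < c (Suc l)" using tb b_def by linarith
    have e2: "c (Suc l) - (?F (Suc l) + t) = b - t" unfolding b_def by simp
    have g2: "linkflow N g (Suc l) = ?F (Suc l) + t" using glf[of "Suc l"] by simp
    have gi2: "g i (Suc l) = f i (Suc l) + t" unfolding g_def h_def by simp
    show "ereal (g i (Suc l)) * linkcost T c (Suc l) (linkflow N g (Suc l))
        = ereal ((f i (Suc l) + t) * T (b - t))"
      by (simp only: gi2 g2 term_fin[OF lt2] e2)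
    show "ereal (f i l) * linkcost T c l (?F l) = ereal (f i l * T a)"
      using Fc lS unfolding a_def by (simp add: term_fin)
    show "ereal (f i (Suc l)) * linkcost T c (Suc l) (?F (Suc l)) = ereal (f i (Suc l) * T b)"
      using Fc lS unfolding b_def by (simp add: term_fin)
    show "(f i l - t) * T (a + t) + (f i (Suc l) + t) * T (b - t) < f i l * T a + f i (Suc l) * T b"
      by (rule key[OF T_convex T_strict_decr a0 t0(1) _ bc1 y0]) (use t0 ab i in auto)
  qed
  moreover have "user_cost N L T c f i \<le> user_cost N L T c g i"
    using ne hstrat i(1) unfolding nash_eq_def g_def by blast
  ultimately show False by simp
qed

end

theorem lemma2p2:
  fixes N L :: nat and r c :: "nat \<Rightarrow> real" and T T' :: "real \<Rightarrow> real"
    and fstar fhat :: "nat \<Rightarrow> nat \<Rightarrow> real" and l :: nat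
  assumes N_pos: "N \<ge> 1"
    and cap_pos: "\<forall>k\<in>{1..L}. 0 < c k"
    and cap_sorted: "\<forall>k. 1 \<le> k \<and> k < L \<longrightarrow> c (k + 1) \<le> c k"
    and dem_pos: "\<forall>i\<in>{1..N}. 0 < r i"
    and dem_cap: "(\<Sum>i=1..N. r i) < (\<Sum>k=1..L. c k)"
    and T_nonneg: "\<forall>x\<in>{0<..c 1}. 0 \<le> T x"
    and T_strict_decr: "\<forall>x y. 0 < x \<and> x < y \<and> y \<le> c 1 \<longrightarrow> T y < T x"
    and T_convex: "convex_on {0<..c 1} T"
    and T_deriv: "\<forall>x\<in>{0<..c 1}. (T has_real_derivative T' x) (at x within {0<..c 1})"
    and T'_cont: "continuous_on {0<..c 1} T'"
    and opt: "social_opt N L r T c fstar"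
    and ne: "nash_eq N L r T c fhat"
    and l: "1 \<le> l" "l < L"
  shows "linkcost T c l (linkflow N fstar l) \<le> linkcost T c (l + 1) (linkflow N fstar (l + 1))
       \<and> linkcost T c l (linkflow N fhat l) \<le> linkcost T c (l + 1) (linkflow N fhat (l + 1))"
proof -
  interpret game N L r c T
    by unfold_locales (use cap_pos cap_sorted dem_pos dem_cap T_nonneg T_strict_decr T_convex in auto)
  show ?thesis using part_opt[OF opt l] part_nash[OF ne l] by simp
qed

end
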